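(* Let $m\in\mathbb{Z}_{>0}$ and $X=\{\bot\}\cup\{a_{ij}:i\in\{1,2,3,4\},j\in\{1,\dots,m\}\}$. Let $\mu_X$ be the distribution on $X$ with mass $1/2$ on $\bot$ and mass $1/(8m)$ on each $a_{ij}$. For $h\in\{-1,1\}^m$ define $s_h:X\to[-1,1]$ by $s_h(\bot)=1$, $s_h(a_{1j})=(h_j+2)/3$, $s_h(a_{2j})=(-h_j+2)/3$, $s_h(a_{3j})=(h_j-2)/3$, $s_h(a_{4j})=(-h_j-2)/3$. For $p,r\in\{-1,1\}^m$ define $b_{p,r}:X\to[-1,1]$ by $b_{p,r}(\bot)=0$, $b_{p,r}(a_{1j})=r_j$, $b_{p,r}(a_{2j})=p_j$, $b_{p,r}(a_{3j})=-r_j$, $b_{p,r}(a_{4j})=-p_j$. Let $S=\{s_h:h\in\{-1,1\}^m\}$ and $B=\{b_{p,r}:p,r\in\{-1,1\}^m\}$. Then for every $\varepsilon,\delta\in(0,1/2)$, $\#\mathsf{MC}^{\mu_X}(B,S,\varepsilon,\delta)\le O(\varepsilon^{-2}\log(1/\delta))$, and for every $\varepsilon\in(0,1/28)$ and $\delta\in(0,1/2)$, $\#\mathsf{MC}^{\mu_X}(S,B,\varepsilon,\delta)\ge(1-28\varepsilon)m$.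
   Context: For total classes $S,B\subseteq[-1,1]^X$, a distribution $\mu$ on $X\times[-1,1]$ and a model $f:X\to[-1,1]$ with countable range $V$, $\mathsf{MC\text{-}error}_{\mu,B}(f)=\sup_{b\in B}\sum_{v\in V}\big|\mathbb{E}_\mu[(f(x)-y)\mathbf{1}(f(x)=v)b(x)]\big|$. Distribution-specific realizable multicalibration $\mathsf{MC}^{\mu_X}_n(S,B,\varepsilon,\delta)$: (possibly randomized) learners taking $n$ points of $X\times[-1,1]$ and outputting $f:X\to[-1,1]$ (countable range) such that for every distribution $\mu$ on $X\times[-1,1]$ with $\mu|_X=\mu_X$ and $\mathbb{E}_\mu[y|x]=s(x)$ for some $s\in S$, with probability $\ge1-\delta$ over $n$ i.i.d. samples, $\mathsf{MC\text{-}error}_{\mu,B}(f)\le\varepsilon$. $\#\mathsf{MC}^{\mu_X}$ is the least such $n$; $\log$ base 2. *)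

theory Defs
  imports "HOL-Probability.Probability"
begin

text \<open>Points of the (ambient, countable) type. The actual domain X is a finite subset
  Xs of this type; a distribution mu_X on X is given by its point masses w.\<close>

datatype pt = Bot | A nat nat

type_synonym model = "pt \<Rightarrow> real"

definition MC_error :: "(pt \<times> real) measure \<Rightarrow> pt set \<Rightarrow> model set \<Rightarrow> model \<Rightarrow> real" where
  "MC_error M Xs B f =
     (SUP b\<in>B. \<Sum>v\<in>f ` Xs.
        \<bar>\<integral>z. (f (fst z) - snd z) * indicator {v} (f (fst z)) * b (fst z) \<partial>M\<bar>)"

text \<open>M is a distribution on X x [-1,1] with X-marginal given by point masses w and
  E[y | x] = s(x) for some s in S (conditional expectation on the countable set X,
  which is only constrained where w x > 0).\<close>
definition realizable_dist :: "pt set \<Rightarrow> (pt \<Rightarrow> real) \<Rightarrow> model set \<Rightarrow> (pt \<times> real) measure \<Rightarrow> bool" where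
  "realizable_dist Xs w S M \<longleftrightarrow>
     prob_space M \<and>
     sets M = sets (count_space UNIV \<Otimes>\<^sub>M borel) \<and>
     (AE z in M. fst z \<in> Xs \<and> snd z \<in> {-1..1}) \<and>
     (\<forall>x. measure M ({x} \<times> UNIV) = w x) \<and>
     (\<exists>s\<in>S. \<forall>x. (\<integral>z. snd z * indicator {x} (fst z) \<partial>M) = s x * w x)"

text \<open>Inner probability (avoids measurability requirements on the success event).\<close>
definition inner_prob :: "'a measure \<Rightarrow> 'a set \<Rightarrow> ennreal" where
  "inner_prob N E = (SUP C\<in>{C\<in>sets N. C \<subseteq> E}. emeasure N C)"

definition MC_learner ::
  "pt set \<Rightarrow> (pt \<Rightarrow> real) \<Rightarrow> model set \<Rightarrow> model set \<Rightarrow> real \<Rightarrow> real \<Rightarrow> nat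
     \<Rightarrow> ((pt \<times> real) list \<Rightarrow> model measure) \<Rightarrow> bool" where
  "MC_learner Xs w S B \<epsilon> \<delta> n L \<longleftrightarrow>
     (\<forall>D. prob_space (L D) \<and>
          (\<forall>f\<in>space (L D). (\<forall>x\<in>Xs. f x \<in> {-1..1}) \<and> countable (f ` Xs))) \<and>
     (\<forall>M. realizable_dist Xs w S M \<longrightarrow>
          (\<integral>\<^sup>+ smp. inner_prob (L (map smp [0..<n])) {f. MC_error M Xs B f \<le> \<epsilon>}
              \<partial>(PiM {..<n} (\<lambda>_. M))) \<ge> ennreal (1 - \<delta>))"

definition MC_learnable ::
  "pt set \<Rightarrow> (pt \<Rightarrow> real) \<Rightarrow> model set \<Rightarrow> model set \<Rightarrow> real \<Rightarrow> real \<Rightarrow> nat \<Rightarrow> bool" where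
  "MC_learnable Xs w S B \<epsilon> \<delta> n \<longleftrightarrow> (\<exists>L. MC_learner Xs w S B \<epsilon> \<delta> n L)"

text \<open>Sample complexity; infinity if no n works.\<close>
definition numMC ::
  "pt set \<Rightarrow> (pt \<Rightarrow> real) \<Rightarrow> model set \<Rightarrow> model set \<Rightarrow> real \<Rightarrow> real \<Rightarrow> enat" where
  "numMC Xs w S B \<epsilon> \<delta> = (INF n\<in>{n. MC_learnable Xs w S B \<epsilon> \<delta> n}. enat n)"

definition Xset :: "nat \<Rightarrow> pt set" where
  "Xset m = insert Bot {A i j | i j. i \<in> {1..4} \<and> j \<in> {1..m}}"

definition muX :: "nat \<Rightarrow> pt \<Rightarrow> real" where
  "muX m x = (case x of Bot \<Rightarrow> 1/2
     | A i j \<Rightarrow> if i \<in> {1..4} \<and> j \<in> {1..m} then 1 / (8 * real m) else 0)"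

definition sfun :: "nat \<Rightarrow> (nat \<Rightarrow> real) \<Rightarrow> model" where
  "sfun m h x = (case x of Bot \<Rightarrow> 1
     | A i j \<Rightarrow> if j \<in> {1..m} then
         (if i = 1 then (h j + 2) / 3 else if i = 2 then (- h j + 2) / 3
          else if i = 3 then (h j - 2) / 3 else if i = 4 then (- h j - 2) / 3 else 0)
       else 0)"

definition bfun :: "nat \<Rightarrow> (nat \<Rightarrow> real) \<Rightarrow> (nat \<Rightarrow> real) \<Rightarrow> model" where
  "bfun m p r x = (case x of Bot \<Rightarrow> 0
     | A i j \<Rightarrow> if j \<in> {1..m} then
         (if i = 1 then r j else if i = 2 then p j
          else if i = 3 then - r j else if i = 4 then - p j else 0)
       else 0)"

definition Sfam :: "nat \<Rightarrow> model set" where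
  "Sfam m = {sfun m h | h. h \<in> {1..m} \<rightarrow>\<^sub>E {-1, 1}}"

definition Bfam :: "nat \<Rightarrow> model set" where
  "Bfam m = {bfun m p r | p r. p \<in> {1..m} \<rightarrow>\<^sub>E {-1, 1} \<and> r \<in> {1..m} \<rightarrow>\<^sub>E {-1, 1}}"

end

theory Submission
  imports Defs
begin


lemma Xset_eq: "Xset m = insert Bot ((\<lambda>(i,j). A i j) ` ({1..4}\<times>{1..m}))"
  unfolding Xset_def by auto

lemma finite_Xset[simp]: "finite (Xset m)"
  unfolding Xset_eq by auto

lemma sum_Xset: "(\<Sum>x\<in>Xset m. g x) = g Bot + (\<Sum>j\<in>{1..m}. g (A 1 j) + g (A 2 j) + g (A 3 j) + g (A 4 j))"
proof -
  have inj: "inj_on (\<lambda>(i,j). A i j) ({1..4}\<times>{1..m})" by (auto simp: inj_on_def)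
  have "(\<Sum>x\<in>Xset m. g x) = g Bot + (\<Sum>x\<in>(\<lambda>(i,j). A i j) ` ({1..4}\<times>{1..m}). g x)"
    unfolding Xset_eq by (subst sum.insert) auto
  also have "(\<Sum>x\<in>(\<lambda>(i,j). A i j) ` ({1..4}\<times>{1..m}). g x) = (\<Sum>(i,j)\<in>{1..4}\<times>{1..m}. g (A i j))"
    by (subst sum.reindex[OF inj]) (simp add: case_prod_beta')
  also have "\<dots> = (\<Sum>i\<in>{1..4}. \<Sum>j\<in>{1..m}. g (A i j))"
    by (rule sum.cartesian_product[symmetric])
  also have "\<dots> = (\<Sum>j\<in>{1..m}. \<Sum>i\<in>{1..4}. g (A i j))"
    by (rule sum.swap)
  also have "\<dots> = (\<Sum>j\<in>{1..m}. g (A 1 j) + g (A 2 j) + g (A 3 j) + g (A 4 j))"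
    by (intro sum.cong refl) (simp add: numeral_eq_Suc atLeastAtMostSuc_conv add.commute add.left_commute)
  finally show ?thesis .
qed

lemma muX_nonneg: "0 \<le> muX m x"
  by (auto simp: muX_def split: pt.splits)

lemma muX_out: "x \<notin> Xset m \<Longrightarrow> muX m x = 0"
  by (auto simp: muX_def Xset_def split: pt.splits)

lemma muX_A: "i \<in> {1..4} \<Longrightarrow> j \<in> {1..m} \<Longrightarrow> muX m (A i j) = 1 / (8 * real m)"
  by (simp add: muX_def)

lemma sum_muX: "m > 0 \<Longrightarrow> (\<Sum>x\<in>Xset m. muX m x) = 1"
  by (simp add: sum_Xset muX_A) (simp add: muX_def)

definition PP :: "nat \<Rightarrow> pt pmf" where "PP m = embed_pmf (muX m)"

lemma pmf_PP: assumes "m > 0" shows "pmf (PP m) x = muX m x"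
proof -
  have "(\<integral>\<^sup>+x. ennreal (muX m x) \<partial>count_space UNIV) = (\<Sum>x\<in>Xset m. ennreal (muX m x))"
    by (rule nn_integral_count_space') (auto simp: muX_out)
  also have "\<dots> = ennreal (\<Sum>x\<in>Xset m. muX m x)"
    by (rule sum_ennreal) (simp add: muX_nonneg)
  also have "\<dots> = 1" using sum_muX[OF assms] by simp
  finally have "(\<integral>\<^sup>+x. ennreal (muX m x) \<partial>count_space UNIV) = 1" .
  then show ?thesis unfolding PP_def by (subst pmf_embed_pmf) (auto simp: muX_nonneg)
qed

lemma set_PP: "m > 0 \<Longrightarrow> set_pmf (PP m) \<subseteq> Xset m"
  using pmf_PP muX_out by (auto simp: set_pmf_eq)

definition NN :: "(pt \<times> real) measure" where "NN = count_space UNIV \<Otimes>\<^sub>M borel"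

lemma meas_pt[measurable]: "(F :: pt \<Rightarrow> real) \<in> borel_measurable (count_space UNIV)"
  by simp

definition sg :: "real \<Rightarrow> real" where "sg v = (if v \<ge> 0 then 1 else -1)"

lemma Zpair:
  fixes a1 a3 t :: real
  assumes "a1 \<in> {-1..1}" "a3 \<in> {-1..1}" "t \<in> {-1,1}"
  shows "\<bar>sg a1 * (a1 - (t+2)/3) - sg a3 * (a3 - (t-2)/3)\<bar> + \<bar>sg a1 * (a1 - (-t+2)/3) - sg a3 * (a3 - (-t-2)/3)\<bar> \<ge> 2/3"
  using assms unfolding sg_def by (auto split: if_splits simp: abs_if)



definition gh :: "nat \<Rightarrow> (nat \<Rightarrow> real) \<Rightarrow> pt \<Rightarrow> pt \<times> real" where
  "gh m h x = (x, sfun m h x)"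

definition Mh :: "nat \<Rightarrow> (nat \<Rightarrow> real) \<Rightarrow> (pt \<times> real) measure" where
  "Mh m h = distr (measure_pmf (PP m)) NN (gh m h)"

lemma space_NN[simp]: "space NN = UNIV"
  by (simp add: NN_def space_pair_measure)

lemma gh_meas[measurable]: "gh m h \<in> measurable (measure_pmf (PP m)) NN"
  by simp

lemma prob_Mh: "prob_space (Mh m h)"
  unfolding Mh_def by (rule measure_pmf.prob_space_distr) simp

lemma sets_Mh[simp]: "sets (Mh m h) = sets NN"
  unfolding Mh_def by simp

lemma space_Mh[simp]: "space (Mh m h) = UNIV"
  unfolding Mh_def by (simp add: NN_def space_pair_measure)

lemma integral_Mh:
  assumes "m > 0" and g: "g \<in> borel_measurable NN"
  shows "(\<integral>z. g z \<partial>Mh m h) = (\<Sum>x\<in>Xset m. muX m x * g (x, sfun m h x))"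
proof -
  have "(\<integral>z. g z \<partial>Mh m h) = (\<integral>x. g (gh m h x) \<partial>measure_pmf (PP m))"
    unfolding Mh_def by (rule integral_distr[OF gh_meas g])
  also have "\<dots> = (\<Sum>x\<in>Xset m. g (gh m h x) * pmf (PP m) x)"
    by (rule integral_measure_pmf_real) (use set_PP[OF assms(1)] in auto)
  finally show ?thesis by (simp add: pmf_PP[OF assms(1)] gh_def mult.commute)
qed

lemma measure_Mh: "m > 0 \<Longrightarrow> measure (Mh m h) ({x} \<times> UNIV) = muX m x"
proof -
  assume m: "m > 0"
  have "{x} \<times> UNIV \<in> sets NN" unfolding NN_def by simp
  then have "measure (Mh m h) ({x} \<times> UNIV) = measure (measure_pmf (PP m)) (gh m h -` ({x} \<times> UNIV) \<inter> space (measure_pmf (PP m)))"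
    unfolding Mh_def by (rule measure_distr[OF gh_meas])
  also have "gh m h -` ({x} \<times> UNIV) \<inter> space (measure_pmf (PP m)) = {x}" by (auto simp: gh_def)
  finally show ?thesis by (simp add: measure_pmf_single pmf_PP[OF m])
qed

lemma sfun_bound: "h \<in> {1..m} \<rightarrow>\<^sub>E {-1,1} \<Longrightarrow> sfun m h x \<in> {-1..1}"
  by (auto simp: sfun_def split: pt.splits dest!: PiE_mem)

lemma realizable_Mh:
  assumes m: "m > 0" and h: "h \<in> {1..m} \<rightarrow>\<^sub>E {-1,1}"
  shows "realizable_dist (Xset m) (muX m) (Sfam m) (Mh m h)"
  unfolding realizable_dist_def
proof (intro conjI)
  show "prob_space (Mh m h)" by (rule prob_Mh)
  show "sets (Mh m h) = sets (count_space UNIV \<Otimes>\<^sub>M borel)" by (simp add: NN_def)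
  show "AE z in Mh m h. fst z \<in> Xset m \<and> snd z \<in> {- 1..1}"
    unfolding Mh_def
  proof (subst AE_distr_iff)
    show "{z \<in> space NN. fst z \<in> Xset m \<and> snd z \<in> {- 1..1}} \<in> sets NN"
    proof -
      have "{z \<in> space NN. fst z \<in> Xset m \<and> snd z \<in> {- 1..1}} = Xset m \<times> {-1..1}" by auto
      moreover have "Xset m \<times> {-1..1::real} \<in> sets NN" unfolding NN_def by (rule pair_measureI) auto
      ultimately show ?thesis by simp
    qed
    show "AE x in measure_pmf (PP m). fst (gh m h x) \<in> Xset m \<and> snd (gh m h x) \<in> {- 1..1}"
      using set_PP[OF m] sfun_bound[OF h] by (auto simp: gh_def AE_measure_pmf_iff)
  qed (rule gh_meas)
  show "\<forall>x. measure (Mh m h) ({x} \<times> UNIV) = muX m x" using measure_Mh[OF m] by blast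
  show "\<exists>s\<in>Sfam m. \<forall>x. (\<integral>z. snd z * indicator {x} (fst z) \<partial>Mh m h) = s x * muX m x"
  proof (intro bexI allI)
    show "sfun m h \<in> Sfam m" using h by (auto simp: Sfam_def)
    fix x
    have "(\<integral>z. snd z * indicator {x} (fst z) \<partial>Mh m h) = (\<Sum>y\<in>Xset m. muX m y * (sfun m h y * indicator {x} y))"
    proof -
      have "(\<lambda>z. snd z * indicator {x} (fst z) :: real) \<in> borel_measurable NN"
        unfolding NN_def by measurable
      from integral_Mh[OF m this] show ?thesis by simp
    qed
    also have "\<dots> = (\<Sum>y\<in>Xset m. if y = x then sfun m h x * muX m x else 0)"
      by (intro sum.cong) (auto simp: indicator_def)
    also have "\<dots> = sfun m h x * muX m x"
      using muX_out[of x m] by (simp add: sum.delta)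
    finally show "(\<integral>z. snd z * indicator {x} (fst z) \<partial>Mh m h) = sfun m h x * muX m x" .
  qed
qed




lemma MC_error_Mh:
  assumes m: "m > 0"
  shows "MC_error (Mh m h) (Xset m) B f =
    (SUP b\<in>B. \<Sum>v\<in>f ` Xset m. \<bar>\<Sum>x\<in>Xset m. muX m x * ((f x - sfun m h x) * indicator {v} (f x) * b x)\<bar>)"
  unfolding MC_error_def
proof (intro SUP_cong refl sum.cong)
  fix b v
  have "(\<lambda>z. (f (fst z) - snd z) * indicator {v} (f (fst z)) * b (fst z) :: real) \<in> borel_measurable NN"
    unfolding NN_def by measurable
  from integral_Mh[OF m this]
  show "\<bar>\<integral>z. (f (fst z) - snd z) * indicator {v} (f (fst z)) * b (fst z) \<partial>Mh m h\<bar> =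
        \<bar>\<Sum>x\<in>Xset m. muX m x * ((f x - sfun m h x) * indicator {v} (f x) * b x)\<bar>" by simp
qed

definition Zf :: "nat \<Rightarrow> model \<Rightarrow> (nat \<Rightarrow> real) \<Rightarrow> nat \<Rightarrow> real" where
  "Zf m f h j =
     \<bar>sg (f (A 1 j)) * (f (A 1 j) - sfun m h (A 1 j)) - sg (f (A 3 j)) * (f (A 3 j) - sfun m h (A 3 j))\<bar>
   + \<bar>sg (f (A 2 j)) * (f (A 2 j) - sfun m h (A 2 j)) - sg (f (A 4 j)) * (f (A 4 j) - sfun m h (A 4 j))\<bar>"

lemma bfun_bound: "p \<in> {1..m} \<rightarrow>\<^sub>E {-1,1} \<Longrightarrow> r \<in> {1..m} \<rightarrow>\<^sub>E {-1,1} \<Longrightarrow> \<bar>bfun m p r x\<bar> \<le> 1"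
  by (auto simp: bfun_def split: pt.splits dest!: PiE_mem)

lemma sg_abs: "\<bar>sg v\<bar> = 1" by (simp add: sg_def)

lemma err_lower:
  assumes m: "m > 0" and h: "h \<in> {1..m} \<rightarrow>\<^sub>E {-1,1}" and f: "\<And>x. x \<in> Xset m \<Longrightarrow> f x \<in> {-1..1}"
  shows "MC_error (Mh m h) (Xset m) (Bfam m) f \<ge> (\<Sum>j\<in>{1..m}. Zf m f h j) / (8 * real m)"
proof -
  define d where "d x = f x - sfun m h x" for x
  define \<Phi> where "\<Phi> b = (\<Sum>v\<in>f ` Xset m. \<bar>\<Sum>x\<in>Xset m. muX m x * (d x * indicator {v} (f x) * b x)\<bar>)" for b :: model
  define r where "r = restrict (\<lambda>j. if sg (f (A 1 j)) * d (A 1 j) - sg (f (A 3 j)) * d (A 3 j) \<ge> 0 then 1 else -1 :: real) {1..m}"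
  define p where "p = restrict (\<lambda>j. if sg (f (A 2 j)) * d (A 2 j) - sg (f (A 4 j)) * d (A 4 j) \<ge> 0 then 1 else -1 :: real) {1..m}"
  have r: "r \<in> {1..m} \<rightarrow>\<^sub>E {-1,1}" and p: "p \<in> {1..m} \<rightarrow>\<^sub>E {-1,1}" by (auto simp: r_def p_def)
  have bstar: "bfun m p r \<in> Bfam m" using p r by (auto simp: Bfam_def)
  have err: "MC_error (Mh m h) (Xset m) (Bfam m) f = (SUP b\<in>Bfam m. \<Phi> b)"
    unfolding MC_error_Mh[OF m] \<Phi>_def d_def ..
  have dbound: "\<bar>d x\<bar> \<le> 2" if "x \<in> Xset m" for x
    using f[OF that] sfun_bound[OF h, of x] by (auto simp: d_def abs_if)
  have bdd: "bdd_above (\<Phi> ` Bfam m)"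
  proof (rule bdd_aboveI2)
    fix b assume "b \<in> Bfam m"
    then obtain p' r' where b: "b = bfun m p' r'" "p' \<in> {1..m} \<rightarrow>\<^sub>E {-1,1}" "r' \<in> {1..m} \<rightarrow>\<^sub>E {-1,1}"
      by (auto simp: Bfam_def)
    have "\<Phi> b \<le> (\<Sum>v\<in>f ` Xset m. \<Sum>x\<in>Xset m. muX m x * 2)"
      unfolding \<Phi>_def
    proof (intro sum_mono order.trans[OF sum_abs] mult_left_mono muX_nonneg)
      fix v x assume x: "x \<in> Xset m"
      have "\<bar>muX m x * (d x * indicator {v} (f x) * b x)\<bar> = muX m x * (\<bar>d x\<bar> * indicator {v} (f x) * \<bar>b x\<bar>)"
        by (simp add: abs_mult muX_nonneg)
      also have "\<dots> \<le> muX m x * (2 * 1 * 1)"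
        using dbound[OF x] bfun_bound[OF b(2,3), of x] b(1)
        by (intro mult_left_mono mult_mono muX_nonneg) (auto simp: indicator_def)
      finally show "\<bar>muX m x * (d x * indicator {v} (f x) * b x)\<bar> \<le> muX m x * 2" by simp
    qed
    then show "\<Phi> b \<le> (\<Sum>v\<in>f ` Xset m. \<Sum>x\<in>Xset m. muX m x * 2)" .
  qed
  have "\<Phi> (bfun m p r) \<le> (SUP b\<in>Bfam m. \<Phi> b)"
    by (rule cSUP_upper[OF bstar bdd])
  moreover
  have "\<Phi> (bfun m p r) \<ge> (\<Sum>v\<in>f ` Xset m. sg v * (\<Sum>x\<in>Xset m. muX m x * (d x * indicator {v} (f x) * bfun m p r x)))"
    unfolding \<Phi>_def
  proof (rule sum_mono)
    fix v
    show "sg v * (\<Sum>x\<in>Xset m. muX m x * (d x * indicator {v} (f x) * bfun m p r x))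
      \<le> \<bar>\<Sum>x\<in>Xset m. muX m x * (d x * indicator {v} (f x) * bfun m p r x)\<bar>"
      by (simp add: sg_def abs_if)
  qed
  moreover
  have "(\<Sum>v\<in>f ` Xset m. sg v * (\<Sum>x\<in>Xset m. muX m x * (d x * indicator {v} (f x) * bfun m p r x)))
      = (\<Sum>x\<in>Xset m. \<Sum>v\<in>f ` Xset m. (if v = f x then muX m x * sg (f x) * d x * bfun m p r x else 0))"
    by (subst sum.swap) (auto simp: sum_distrib_left indicator_def intro!: sum.cong)
  moreover
  have "\<dots> = (\<Sum>x\<in>Xset m. muX m x * sg (f x) * d x * bfun m p r x)"
    by (intro sum.cong refl) (auto simp: sum.delta')
  moreover
  have "\<dots> = (\<Sum>j\<in>{1..m}. Zf m f h j) / (8 * real m)"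
    unfolding sum_Xset sum_divide_distrib
  proof -
    have "(\<Sum>j = 1..m. muX m (A 1 j) * sg (f (A 1 j)) * d (A 1 j) * bfun m p r (A 1 j) +
          muX m (A 2 j) * sg (f (A 2 j)) * d (A 2 j) * bfun m p r (A 2 j) +
          muX m (A 3 j) * sg (f (A 3 j)) * d (A 3 j) * bfun m p r (A 3 j) +
          muX m (A 4 j) * sg (f (A 4 j)) * d (A 4 j) * bfun m p r (A 4 j))
        = (\<Sum>j = 1..m. Zf m f h j / (8 * real m))"
    proof (intro sum.cong refl)
      fix j assume j: "j \<in> {1..m}"
      have e1: "r j * (sg (f (A 1 j)) * d (A 1 j) - sg (f (A 3 j)) * d (A 3 j)) = \<bar>sg (f (A 1 j)) * d (A 1 j) - sg (f (A 3 j)) * d (A 3 j)\<bar>"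
        using j by (simp add: r_def abs_if)
      have e2: "p j * (sg (f (A 2 j)) * d (A 2 j) - sg (f (A 4 j)) * d (A 4 j)) = \<bar>sg (f (A 2 j)) * d (A 2 j) - sg (f (A 4 j)) * d (A 4 j)\<bar>"
        using j by (simp add: p_def abs_if)
      show "muX m (A 1 j) * sg (f (A 1 j)) * d (A 1 j) * bfun m p r (A 1 j) +
          muX m (A 2 j) * sg (f (A 2 j)) * d (A 2 j) * bfun m p r (A 2 j) +
          muX m (A 3 j) * sg (f (A 3 j)) * d (A 3 j) * bfun m p r (A 3 j) +
          muX m (A 4 j) * sg (f (A 4 j)) * d (A 4 j) * bfun m p r (A 4 j) = Zf m f h j / (8 * real m)"
        using j e1 e2 unfolding Zf_def d_def[symmetric]
        by (simp add: muX_A bfun_def field_simps)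
    qed
    then show "muX m Bot * sg (f Bot) * d Bot * bfun m p r Bot + (\<Sum>j = 1..m. muX m (A 1 j) * sg (f (A 1 j)) * d (A 1 j) * bfun m p r (A 1 j) +
          muX m (A 2 j) * sg (f (A 2 j)) * d (A 2 j) * bfun m p r (A 2 j) +
          muX m (A 3 j) * sg (f (A 3 j)) * d (A 3 j) * bfun m p r (A 3 j) +
          muX m (A 4 j) * sg (f (A 4 j)) * d (A 4 j) * bfun m p r (A 4 j)) = (\<Sum>j = 1..m. Zf m f h j / (8 * real m))"
      by (simp add: bfun_def)
  qed
  ultimately show ?thesis using err by linarith
qed




lemma Zf_nonneg: "Zf m f h j \<ge> 0" by (simp add: Zf_def)

lemma Zf_pair:
  assumes j: "j \<in> {1..m}" and h: "h \<in> {1..m} \<rightarrow>\<^sub>E {-1,1}" and hh: "h' j = - h j"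
    and f: "\<And>x. x \<in> Xset m \<Longrightarrow> f x \<in> {-1..1}"
  shows "Zf m f h j + Zf m f h' j \<ge> 4/3"
proof -
  have t: "h j \<in> {-1,1}" using h j by auto
  have fA: "f (A i j) \<in> {-1..1}" if "i \<in> {1..4}" for i using f that j by (auto simp: Xset_def)
  have 1: "\<bar>sg (f (A 1 j)) * (f (A 1 j) - (h j+2)/3) - sg (f (A 3 j)) * (f (A 3 j) - (h j-2)/3)\<bar>
     + \<bar>sg (f (A 1 j)) * (f (A 1 j) - (-h j+2)/3) - sg (f (A 3 j)) * (f (A 3 j) - (-h j-2)/3)\<bar> \<ge> 2/3"
    by (rule Zpair) (use fA t in auto)
  have 2: "\<bar>sg (f (A 2 j)) * (f (A 2 j) - (h j+2)/3) - sg (f (A 4 j)) * (f (A 4 j) - (h j-2)/3)\<bar>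
     + \<bar>sg (f (A 2 j)) * (f (A 2 j) - (-h j+2)/3) - sg (f (A 4 j)) * (f (A 4 j) - (-h j-2)/3)\<bar> \<ge> 2/3"
    by (rule Zpair) (use fA t in auto)
  show ?thesis using 1 2 j hh unfolding Zf_def by (simp add: sfun_def)
qed

lemma err_pair:
  assumes m: "m > 0" and h: "h \<in> {1..m} \<rightarrow>\<^sub>E {-1,1}" and h': "h' \<in> {1..m} \<rightarrow>\<^sub>E {-1,1}"
    and T: "T \<subseteq> {1..m}" and hh: "\<And>j. j \<in> T \<Longrightarrow> h' j = - h j"
    and f: "\<And>x. x \<in> Xset m \<Longrightarrow> f x \<in> {-1..1}"
    and card: "real (card T) > 12 * \<epsilon> * real m"
  shows "\<not> (MC_error (Mh m h) (Xset m) (Bfam m) f \<le> \<epsilon> \<and> MC_error (Mh m h') (Xset m) (Bfam m) f \<le> \<epsilon>)"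
proof
  assume a: "MC_error (Mh m h) (Xset m) (Bfam m) f \<le> \<epsilon> \<and> MC_error (Mh m h') (Xset m) (Bfam m) f \<le> \<epsilon>"
  have "(\<Sum>j\<in>T. 4/3) \<le> (\<Sum>j\<in>T. Zf m f h j + Zf m f h' j)"
    using T by (intro sum_mono Zf_pair[OF _ h hh f]) auto
  also have "\<dots> \<le> (\<Sum>j\<in>{1..m}. Zf m f h j + Zf m f h' j)"
    using T by (intro sum_mono2) (auto intro: add_nonneg_nonneg Zf_nonneg)
  finally have "real (card T) * (4/3) \<le> (\<Sum>j\<in>{1..m}. Zf m f h j) + (\<Sum>j\<in>{1..m}. Zf m f h' j)"
    by (simp add: sum.distrib)
  moreover have "(\<Sum>j\<in>{1..m}. Zf m f h j) / (8 * real m) \<le> \<epsilon>"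
    using err_lower[OF m h, where f=f, OF f] a by linarith
  moreover have "(\<Sum>j\<in>{1..m}. Zf m f h' j) / (8 * real m) \<le> \<epsilon>"
    using err_lower[OF m h', where f=f, OF f] a by linarith
  ultimately show False using card m by (simp add: field_simps)
qed




lemma nn_integral_distr_le:
  assumes T: "T \<in> measurable M N"
  shows "(\<integral>\<^sup>+y. F y \<partial>distr M N T) \<le> (\<integral>\<^sup>+x. F (T x) \<partial>M)"
proof -
  have "(\<integral>\<^sup>+y. F y \<partial>distr M N T) = (SUP g\<in>{g. simple_function (distr M N T) g \<and> g \<le> F}. integral\<^sup>S (distr M N T) g)"
    by (rule nn_integral_def)
  also have "\<dots> \<le> (\<integral>\<^sup>+x. F (T x) \<partial>M)"
  proof (rule SUP_least)
    fix g assume g: "g \<in> {g. simple_function (distr M N T) g \<and> g \<le> F}"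
    then have sf: "simple_function (distr M N T) g" and le: "g \<le> F" by auto
    have "integral\<^sup>S (distr M N T) g = integral\<^sup>N (distr M N T) g"
      by (rule nn_integral_eq_simple_integral[OF sf, symmetric])
    also have "\<dots> = (\<integral>\<^sup>+x. g (T x) \<partial>M)"
      by (rule nn_integral_distr[OF T borel_measurable_simple_function[OF sf]])
    also have "\<dots> \<le> (\<integral>\<^sup>+x. F (T x) \<partial>M)"
      using le by (intro nn_integral_mono) (auto simp: le_fun_def)
    finally show "integral\<^sup>S (distr M N T) g \<le> (\<integral>\<^sup>+x. F (T x) \<partial>M)" .
  qed
  finally show ?thesis .
qed

lemma inner_prob_disj:
  assumes P: "prob_space P" and AB: "S1 \<inter> S2 \<inter> space P = {}"
  shows "inner_prob P S1 + inner_prob P S2 \<le> 1"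
proof -
  have ne1: "{C \<in> sets P. C \<subseteq> S1} \<noteq> {}" and ne2: "{C \<in> sets P. C \<subseteq> S2} \<noteq> {}" by auto
  have "inner_prob P S1 + inner_prob P S2 = (SUP C1\<in>{C \<in> sets P. C \<subseteq> S1}. SUP C2\<in>{C \<in> sets P. C \<subseteq> S2}. emeasure P C1 + emeasure P C2)"
    unfolding inner_prob_def
    by (subst ennreal_SUP_add_left[OF ne1, symmetric]) (simp add: ennreal_SUP_add_right[OF ne2])
  also have "\<dots> \<le> 1"
  proof (intro SUP_least)
    fix C1 C2 assume C1: "C1 \<in> {C \<in> sets P. C \<subseteq> S1}" and C2: "C2 \<in> {C \<in> sets P. C \<subseteq> S2}"
    have disj: "C1 \<inter> C2 = {}" using C1 C2 AB sets.sets_into_space[of C1 P] by auto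
    have "emeasure P C1 + emeasure P C2 = emeasure P (C1 \<union> C2)"
      using C1 C2 disj by (intro plus_emeasure) auto
    also have "\<dots> \<le> 1" using prob_space.emeasure_le_1[OF P] by simp
    finally show "emeasure P C1 + emeasure P C2 \<le> 1" .
  qed
  finally show ?thesis .
qed

lemma countable_pt: "countable (UNIV :: pt set)"
proof -
  have "UNIV = insert Bot ((\<lambda>(i,j). A i j) ` UNIV)" by (auto intro: pt.exhaust)
  moreover have "countable ((\<lambda>(i,j). A i j) ` (UNIV :: (nat \<times> nat) set))" by (rule countable_image) simp
  ultimately show ?thesis by (metis countable_insert)
qed

lemma sets_Omega0:
  fixes Q :: "pt pmf" and n :: nat
  shows "sets (PiM {..<n} (\<lambda>_. measure_pmf Q)) = Pow (space (PiM {..<n} (\<lambda>_. measure_pmf Q)))"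
proof
  show "sets (PiM {..<n} (\<lambda>_. measure_pmf Q)) \<subseteq> Pow (space (PiM {..<n} (\<lambda>_. measure_pmf Q)))"
    using sets.sets_into_space by auto
  show "Pow (space (PiM {..<n} (\<lambda>_. measure_pmf Q))) \<subseteq> sets (PiM {..<n} (\<lambda>_. measure_pmf Q))"
  proof
    fix S assume S: "S \<in> Pow (space (PiM {..<n} (\<lambda>_. measure_pmf Q)))"
    have sp: "space (PiM {..<n} (\<lambda>_. measure_pmf Q)) = PiE {..<n} (\<lambda>_. UNIV)"
      by (simp add: space_PiM)
    have "countable (PiE {..<n} (\<lambda>_. UNIV :: pt set))"
      by (rule countable_PiE) (auto simp: countable_pt)
    then have cS: "countable S"
      using S sp by (auto intro: countable_subset)
    have "S = (\<Union>x\<in>S. PiE {..<n} (\<lambda>i. {x i}))"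
    proof (rule set_eqI)
      fix y show "y \<in> S \<longleftrightarrow> y \<in> (\<Union>x\<in>S. PiE {..<n} (\<lambda>i. {x i}))"
      proof
        assume "y \<in> S" then show "y \<in> (\<Union>x\<in>S. PiE {..<n} (\<lambda>i. {x i}))"
          using S sp by (intro UN_I[of y]) (auto simp: PiE_iff)
      next
        assume "y \<in> (\<Union>x\<in>S. PiE {..<n} (\<lambda>i. {x i}))"
        then obtain x where x: "x \<in> S" "y \<in> PiE {..<n} (\<lambda>i. {x i})" by auto
        have "x \<in> PiE {..<n} (\<lambda>_. UNIV)" using x(1) S sp by auto
        then have "y = x" using x(2) by (auto simp: PiE_iff extensional_def fun_eq_iff) (metis lessThan_iff)
        then show "y \<in> S" using x by simp
      qed
    qed
    also have "\<dots> \<in> sets (PiM {..<n} (\<lambda>_. measure_pmf Q))"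
      using cS by (intro sets.countable_UN'' sets_PiM_I_finite) auto
    finally show "S \<in> sets (PiM {..<n} (\<lambda>_. measure_pmf Q))" .
  qed
qed

lemma meas_Omega0:
  fixes Q :: "pt pmf" and F :: "(nat \<Rightarrow> pt) \<Rightarrow> ennreal" and n :: nat
  shows "F \<in> borel_measurable (PiM {..<n} (\<lambda>_. measure_pmf Q))"
  by (auto simp: measurable_def sets_Omega0)

lemma PiM_Mh:
  fixes n :: nat
  shows
  "PiM {..<n} (\<lambda>_. Mh m h) = distr (PiM {..<n} (\<lambda>_. measure_pmf (PP m))) (PiM {..<n} (\<lambda>_. Mh m h)) (compose {..<n} (gh m h))"
proof -
  have "distr (PiM {..<n} (\<lambda>_. measure_pmf (PP m))) (PiM {..<n} (\<lambda>_. Mh m h)) (compose {..<n} (gh m h))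
      = PiM {..<n} (\<lambda>_. distr (measure_pmf (PP m)) (Mh m h) (gh m h))"
    by (rule distr_PiM_finite_prob_space') (auto simp: prob_Mh measure_pmf.prob_space_axioms)
  also have "(\<lambda>_. distr (measure_pmf (PP m)) (Mh m h) (gh m h)) = (\<lambda>_. Mh m h)"
    unfolding Mh_def[of m h] by (rule ext, rule distr_cong) (auto simp: Mh_def)
  finally show ?thesis by simp
qed





lemma not_learner:
  assumes m: "m > 0" and eps: "\<epsilon> > 0" and del: "\<delta> < 1/2"
    and n: "real n < (1 - 28 * \<epsilon>) * real m"
  shows "\<not> MC_learner (Xset m) (muX m) (Sfam m) (Bfam m) \<epsilon> \<delta> n L"
proof
  assume Lrn: "MC_learner (Xset m) (muX m) (Sfam m) (Bfam m) \<epsilon> \<delta> n L"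
  have Lsp: "\<And>D. prob_space (L D)"
    and Lbd: "\<And>D f x. f \<in> space (L D) \<Longrightarrow> x \<in> Xset m \<Longrightarrow> f x \<in> {-1..1}"
    and succ: "\<And>M. realizable_dist (Xset m) (muX m) (Sfam m) M \<Longrightarrow>
       (\<integral>\<^sup>+ smp. inner_prob (L (map smp [0..<n])) {f. MC_error M (Xset m) (Bfam m) f \<le> \<epsilon>}
              \<partial>(PiM {..<n} (\<lambda>_. M))) \<ge> ennreal (1 - \<delta>)"
    using Lrn unfolding MC_learner_def by blast+
  define H where "H = {1..m} \<rightarrow>\<^sub>E {-1,1::real}"
  define E where "E h = {f. MC_error (Mh m h) (Xset m) (Bfam m) f \<le> \<epsilon>}" for h
  define \<Omega> where "\<Omega> = PiM {..<n} (\<lambda>_. measure_pmf (PP m))"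
  define G where "G h xs = inner_prob (L (map (\<lambda>k. (xs k, sfun m h (xs k))) [0..<n])) (E h)" for h xs
  have finH: "finite H" unfolding H_def by (intro finite_PiE) auto
  have neH: "H \<noteq> {}" unfolding H_def by (auto simp: PiE_eq_empty_iff)
  have cardH: "card H > 0" using finH neH by (simp add: card_gt_0_iff)
  have probO: "prob_space \<Omega>" unfolding \<Omega>_def
    by (intro prob_space_PiM measure_pmf.prob_space_axioms)
  have I_le: "ennreal (1 - \<delta>) \<le> (\<integral>\<^sup>+xs. G h xs \<partial>\<Omega>)" if h: "h \<in> H" for h
  proof -
    let ?F = "\<lambda>smp. inner_prob (L (map smp [0..<n])) (E h)"
    have "ennreal (1 - \<delta>) \<le> (\<integral>\<^sup>+ smp. ?F smp \<partial>(PiM {..<n} (\<lambda>_. Mh m h)))"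
      using succ[OF realizable_Mh[OF m h[unfolded H_def]]] by (simp add: E_def)
    also have "\<dots> = (\<integral>\<^sup>+ smp. ?F smp \<partial>distr \<Omega> (PiM {..<n} (\<lambda>_. Mh m h)) (compose {..<n} (gh m h)))"
      unfolding \<Omega>_def by (rule arg_cong[OF PiM_Mh])
    also have "\<dots> \<le> (\<integral>\<^sup>+ xs. ?F (compose {..<n} (gh m h) xs) \<partial>\<Omega>)"
    proof (rule nn_integral_distr_le)
      show "compose {..<n} (gh m h) \<in> measurable \<Omega> (PiM {..<n} (\<lambda>_. Mh m h))"
        unfolding \<Omega>_def measurable_def
        by (auto simp: sets_Omega0 space_PiM compose_def)
    qed
    also have "\<dots> = (\<integral>\<^sup>+xs. G h xs \<partial>\<Omega>)"
    proof (intro nn_integral_cong)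
      fix xs
      have "map (compose {..<n} (gh m h) xs) [0..<n] = map (\<lambda>k. (xs k, sfun m h (xs k))) [0..<n]"
        by (intro map_cong refl) (auto simp: compose_def gh_def)
      then show "?F (compose {..<n} (gh m h) xs) = G h xs" unfolding G_def
        by (rule arg_cong[where f="\<lambda>D. inner_prob (L D) (E h)"])
    qed
    finally show ?thesis .
  qed
  have pair: "(\<Sum>h\<in>H. G h xs) + (\<Sum>h\<in>H. G h xs) \<le> of_nat (card H)" for xs
  proof -
    define T where "T = {j\<in>{1..m}. \<forall>k<n. \<forall>i. xs k \<noteq> A i j}"
    define fl where "fl h = (\<lambda>j. if j \<in> T then - h j else h j)" for h :: "nat \<Rightarrow> real"
    have T_sub: "T \<subseteq> {1..m}" by (auto simp: T_def)
    have flH: "fl h \<in> H" if "h \<in> H" for h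
      using that T_sub unfolding H_def fl_def by (auto simp: PiE_iff extensional_def)
    have flfl: "fl (fl h) = h" for h by (auto simp: fl_def)
    have "{1..m} - T \<subseteq> (\<lambda>k. case xs k of Bot \<Rightarrow> 0 | A i j \<Rightarrow> j) ` {..<n}"
    proof
      fix j assume "j \<in> {1..m} - T"
      then obtain k i where "k < n" "xs k = A i j" by (auto simp: T_def)
      then show "j \<in> (\<lambda>k. case xs k of Bot \<Rightarrow> 0 | A i j \<Rightarrow> j) ` {..<n}"
        by (intro image_eqI[of _ _ k]) auto
    qed
    then have "card ({1..m} - T) \<le> n"
      by (metis card_image_le card_lessThan card_mono finite_imageI finite_lessThan order_trans)
    moreover have "card ({1..m} - T) = m - card T"
      using T_sub by (simp add: card_Diff_subset finite_subset)
    moreover have "card T \<le> m" using T_sub by (metis card_atLeastAtMost card_mono finite_atLeastAtMost diff_Suc_1)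
    ultimately have "real (card T) \<ge> real m - real n" by linarith
    then have cardT: "real (card T) > 12 * \<epsilon> * real m" using n eps m by (simp add: algebra_simps)
    have Gpair: "G h xs + G (fl h) xs \<le> 1" if h: "h \<in> H" for h
    proof -
      have D: "map (\<lambda>k. (xs k, sfun m (fl h) (xs k))) [0..<n] = map (\<lambda>k. (xs k, sfun m h (xs k))) [0..<n]"
      proof (intro map_cong refl)
        fix k assume "k \<in> set [0..<n]"
        then have k: "k < n" by simp
        show "(xs k, sfun m (fl h) (xs k)) = (xs k, sfun m h (xs k))"
        proof (cases "xs k")
          case Bot then show ?thesis by (simp add: sfun_def)
        next
          case (A i j)
          then have "j \<in> {1..m} \<Longrightarrow> j \<notin> T" using k by (auto simp: T_def)
          then show ?thesis using A by (auto simp: sfun_def fl_def)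
        qed
      qed
      let ?D = "map (\<lambda>k. (xs k, sfun m h (xs k))) [0..<n]"
      have "inner_prob (L ?D) (E h) + inner_prob (L ?D) (E (fl h)) \<le> 1"
      proof (rule inner_prob_disj[OF Lsp])
        show "E h \<inter> E (fl h) \<inter> space (L ?D) = {}"
        proof (rule ccontr)
          assume "E h \<inter> E (fl h) \<inter> space (L ?D) \<noteq> {}"
          then obtain f where f: "f \<in> E h" "f \<in> E (fl h)" "f \<in> space (L ?D)" by blast
          have "\<not> (MC_error (Mh m h) (Xset m) (Bfam m) f \<le> \<epsilon> \<and> MC_error (Mh m (fl h)) (Xset m) (Bfam m) f \<le> \<epsilon>)"
            by (rule err_pair[OF m h[unfolded H_def] flH[OF h, unfolded H_def] T_sub _ Lbd[OF f(3)] cardT])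
               (simp add: fl_def)
          then show False using f by (simp add: E_def)
        qed
      qed
      then show ?thesis unfolding G_def D .
    qed
    have "(\<Sum>h\<in>H. G h xs) = (\<Sum>h\<in>H. G (fl h) xs)"
      by (rule sum.reindex_bij_witness[of _ fl fl]) (auto simp: flfl flH)
    then have "(\<Sum>h\<in>H. G h xs) + (\<Sum>h\<in>H. G h xs) = (\<Sum>h\<in>H. G h xs + G (fl h) xs)"
      by (simp add: sum.distrib)
    also have "\<dots> \<le> (\<Sum>h\<in>H. 1)" by (intro sum_mono Gpair)
    finally show ?thesis by simp
  qed
  have "(\<Sum>h\<in>H. ennreal (1 - \<delta>)) \<le> (\<Sum>h\<in>H. \<integral>\<^sup>+xs. G h xs \<partial>\<Omega>)"
    by (intro sum_mono I_le)
  also have "\<dots> = (\<integral>\<^sup>+xs. (\<Sum>h\<in>H. G h xs) \<partial>\<Omega>)"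
    unfolding \<Omega>_def by (rule nn_integral_sum[symmetric]) (rule meas_Omega0)
  finally have 1: "of_nat (card H) * ennreal (1 - \<delta>) \<le> (\<integral>\<^sup>+xs. (\<Sum>h\<in>H. G h xs) \<partial>\<Omega>)" by simp
  have "(\<integral>\<^sup>+xs. (\<Sum>h\<in>H. G h xs) \<partial>\<Omega>) + (\<integral>\<^sup>+xs. (\<Sum>h\<in>H. G h xs) \<partial>\<Omega>)
      = (\<integral>\<^sup>+xs. (\<Sum>h\<in>H. G h xs) + (\<Sum>h\<in>H. G h xs) \<partial>\<Omega>)"
    unfolding \<Omega>_def by (rule nn_integral_add[symmetric]) (rule meas_Omega0)+
  also have "\<dots> \<le> (\<integral>\<^sup>+xs. of_nat (card H) \<partial>\<Omega>)"
    by (intro nn_integral_mono pair)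
  also have "\<dots> = of_nat (card H)"
    using prob_space.emeasure_space_1[OF probO] by simp
  finally have 2: "(\<integral>\<^sup>+xs. (\<Sum>h\<in>H. G h xs) \<partial>\<Omega>) + (\<integral>\<^sup>+xs. (\<Sum>h\<in>H. G h xs) \<partial>\<Omega>) \<le> of_nat (card H)" .
  have "of_nat (card H) * ennreal (1 - \<delta>) + of_nat (card H) * ennreal (1 - \<delta>) \<le> of_nat (card H)"
    using add_mono[OF 1 1] 2 by (rule order_trans)
  moreover have e: "of_nat (card H) * ennreal (1 - \<delta>) = ennreal (real (card H) * (1 - \<delta>))"
    using del by (subst ennreal_mult) (auto simp: ennreal_of_nat_eq_real_of_nat)
  moreover have "ennreal (real (card H) * (1 - \<delta>) + real (card H) * (1 - \<delta>)) = ennreal (real (card H) * (1 - \<delta>)) + ennreal (real (card H) * (1 - \<delta>))"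
    using del by (intro ennreal_plus) auto
  ultimately have "ennreal (real (card H) * (1 - \<delta>) + real (card H) * (1 - \<delta>)) \<le> ennreal (real (card H))"
    by (simp add: ennreal_of_nat_eq_real_of_nat)
  then have "real (card H) * (1 - \<delta>) + real (card H) * (1 - \<delta>) \<le> real (card H)"
    by (subst (asm) ennreal_le_iff) auto
  then show False using cardH del by (simp add: algebra_simps)
qed




lemma meas_M:
  assumes sM: "sets M = sets NN" and g: "g \<in> borel_measurable NN"
  shows "g \<in> borel_measurable M"
  by (subst measurable_cong_sets[OF sM refl]) (rule g)

lemma decomp_fst:
  fixes g :: "pt \<Rightarrow> real"
  assumes "\<And>x. x \<notin> Xset m \<Longrightarrow> g x = 0"
  shows "g y = (\<Sum>x\<in>Xset m. g x * indicator {x} y)"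
proof (cases "y \<in> Xset m")
  case True
  have "(\<Sum>x\<in>Xset m. g x * indicator {x} y) = (\<Sum>x\<in>Xset m. if x = y then g y else 0)"
    by (intro sum.cong refl) (simp add: indicator_def)
  then show ?thesis using True by (simp add: sum.delta')
next
  case False
  then show ?thesis using assms by (auto simp: indicator_def intro!: sum.neutral)
qed

lemma int_fst:
  fixes M :: "(pt \<times> real) measure" and g :: "pt \<Rightarrow> real"
  assumes P: "prob_space M" and sM: "sets M = sets NN"
    and AEb: "AE z in M. snd z \<in> {-1..1}"
    and marg: "\<And>x. measure M ({x} \<times> UNIV) = muX m x"
    and cond: "\<And>x. (\<integral>z. snd z * indicator {x} (fst z) \<partial>M) = b x * muX m x"
    and g0: "\<And>x. x \<notin> Xset m \<Longrightarrow> g x = 0"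
  shows "(\<integral>z. g (fst z) \<partial>M) = (\<Sum>x\<in>Xset m. g x * muX m x)"
    and "(\<integral>z. snd z * g (fst z) \<partial>M) = (\<Sum>x\<in>Xset m. g x * b x * muX m x)"
proof -
  interpret prob_space M by (rule P)
  have spM: "space M = UNIV" using sets_eq_imp_space_eq[OF sM] by simp
  have ind: "indicator {x} (fst z) = (indicator ({x} \<times> UNIV) z :: real)" for x z
    by (cases z) (auto simp: indicator_def)
  have int1: "integrable M (\<lambda>z. indicator {x} (fst z) :: real)" for x
    by (rule integrable_const_bound[where B=1]) (auto intro!: meas_M[OF sM] simp: NN_def)
  have int2: "integrable M (\<lambda>z. snd z * indicator {x} (fst z) :: real)" for x
  proof (rule integrable_const_bound[where B=1])
    show "AE z in M. norm (snd z * indicator {x} (fst z)) \<le> 1"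
      using AEb by eventually_elim (auto simp: indicator_def abs_mult)
    show "(\<lambda>z. snd z * indicator {x} (fst z) :: real) \<in> borel_measurable M"
      by (rule meas_M[OF sM]) (simp add: NN_def)
  qed
  have "(\<integral>z. g (fst z) \<partial>M) = (\<integral>z. (\<Sum>x\<in>Xset m. g x * indicator {x} (fst z)) \<partial>M)"
    by (subst decomp_fst[where g=g and m=m]) (auto intro: g0)
  also have "\<dots> = (\<Sum>x\<in>Xset m. (\<integral>z. g x * indicator {x} (fst z) \<partial>M))"
    by (rule Bochner_Integration.integral_sum[where I="Xset m" and f="\<lambda>x z. g x * indicator {x} (fst z)"]) (intro integrable_mult_right int1)
  also have "\<dots> = (\<Sum>x\<in>Xset m. g x * (\<integral>z. indicator {x} (fst z) \<partial>M))"
    by simp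
  also have "\<dots> = (\<Sum>x\<in>Xset m. g x * muX m x)"
    by (simp add: ind spM marg)
  finally show "(\<integral>z. g (fst z) \<partial>M) = (\<Sum>x\<in>Xset m. g x * muX m x)" .
  have "(\<integral>z. snd z * g (fst z) \<partial>M) = (\<integral>z. (\<Sum>x\<in>Xset m. g x * (snd z * indicator {x} (fst z))) \<partial>M)"
  proof -
    have pw: "snd z * g (fst z) = (\<Sum>x\<in>Xset m. g x * (snd z * indicator {x} (fst z)))" for z
    proof -
      have "snd z * g (fst z) = snd z * (\<Sum>x\<in>Xset m. g x * indicator {x} (fst z))"
        by (subst decomp_fst[where g=g and m=m and y="fst z"]) (auto intro: g0)
      also have "\<dots> = (\<Sum>x\<in>Xset m. snd z * (g x * indicator {x} (fst z)))"
        by (rule sum_distrib_left)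
      also have "\<dots> = (\<Sum>x\<in>Xset m. g x * (snd z * indicator {x} (fst z)))"
        by (intro sum.cong refl) (simp only: mult_ac)
      finally show ?thesis .
    qed
    show ?thesis by (simp only: pw)
  qed
  also have "\<dots> = (\<Sum>x\<in>Xset m. (\<integral>z. g x * (snd z * indicator {x} (fst z)) \<partial>M))"
    by (rule Bochner_Integration.integral_sum[where I="Xset m" and f="\<lambda>x z. g x * (snd z * indicator {x} (fst z))"]) (intro integrable_mult_right int2)
  also have "\<dots> = (\<Sum>x\<in>Xset m. g x * (\<integral>z. snd z * indicator {x} (fst z) \<partial>M))"
    by simp
  also have "\<dots> = (\<Sum>x\<in>Xset m. g x * b x * muX m x)"
    by (simp add: cond mult_ac)
  finally show "(\<integral>z. snd z * g (fst z) \<partial>M) = (\<Sum>x\<in>Xset m. g x * b x * muX m x)" .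
qed




definition phi :: "nat \<Rightarrow> pt \<Rightarrow> real" where
  "phi m x = (case x of Bot \<Rightarrow> 0 | A i j \<Rightarrow> if j \<in> {1..m} then
     (if i = 1 \<or> i = 2 then 1 else if i = 3 \<or> i = 4 then -1 else 0) else 0)"

lemma phi0: "x \<notin> Xset m \<Longrightarrow> phi m x = 0"
  by (auto simp: phi_def Xset_def split: pt.splits)

lemma sfun0: "x \<notin> Xset m \<Longrightarrow> sfun m h x = 0"
  by (auto simp: sfun_def Xset_def split: pt.splits)

lemma phi_bound: "\<bar>phi m x\<bar> \<le> 1"
  by (auto simp: phi_def split: pt.splits)

lemma sfun_abs: "h \<in> {1..m} \<rightarrow>\<^sub>E {-1,1} \<Longrightarrow> \<bar>sfun m h x\<bar> \<le> 1"
  using sfun_bound[of h m x] by (simp add: abs_le_iff)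

lemma err_const:
  assumes m: "m > 0" and R: "realizable_dist (Xset m) (muX m) (Bfam m) M"
  shows "\<bar>\<integral>z. snd z * phi m (fst z) \<partial>M\<bar> \<le> 1/2"
    and "MC_error M (Xset m) (Sfam m) (\<lambda>_. v) = \<bar>v/2 - (2/3) * (\<integral>z. snd z * phi m (fst z) \<partial>M)\<bar>"
proof -
  have P: "prob_space M" and sM: "sets M = sets (count_space UNIV \<Otimes>\<^sub>M borel)"
    and AE: "AE z in M. fst z \<in> Xset m \<and> snd z \<in> {-1..1}"
    and marg: "\<And>x. measure M ({x} \<times> UNIV) = muX m x"
    and ex: "\<exists>s\<in>Bfam m. \<forall>x. (\<integral>z. snd z * indicator {x} (fst z) \<partial>M) = s x * muX m x"
    using R unfolding realizable_dist_def by blast+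
  interpret prob_space M by (rule P)
  have sM': "sets M = sets NN" using sM by (simp add: NN_def)
  have AEb: "AE z in M. snd z \<in> {-1..1}" using AE by eventually_elim auto
  obtain b where b: "b \<in> Bfam m" and cond: "\<And>x. (\<integral>z. snd z * indicator {x} (fst z) \<partial>M) = b x * muX m x"
    using ex by blast
  obtain p r where bpr: "b = bfun m p r" and p: "p \<in> {1..m} \<rightarrow>\<^sub>E {-1,1}" and r: "r \<in> {1..m} \<rightarrow>\<^sub>E {-1,1}"
    using b by (auto simp: Bfam_def)
  note IF = int_fst[OF P sM' AEb marg cond]
  define E where "E = (\<integral>z. snd z * phi m (fst z) \<partial>M)"
  have E0: "E = (\<Sum>x\<in>Xset m. phi m x * b x * muX m x)"
    unfolding E_def by (rule IF(2)) (rule phi0)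
  have E: "E = (\<Sum>j\<in>{1..m}. (r j + p j) / (4 * real m))"
    unfolding E0 sum_Xset
    by (simp add: phi_def bpr bfun_def muX_A) (simp add: muX_def field_simps)
  have "\<bar>\<Sum>j\<in>{1..m}. (r j + p j) / (4 * real m)\<bar> \<le> (\<Sum>j\<in>{1..m}. 2 / (4 * real m))"
  proof (rule order.trans[OF sum_abs], rule sum_mono)
    fix j assume j: "j \<in> {1..m}"
    have "r j \<in> {-1,1}" "p j \<in> {-1,1}" using p r j by auto
    then have "\<bar>r j + p j\<bar> \<le> 2" by auto
    then show "\<bar>(r j + p j) / (4 * real m)\<bar> \<le> 2 / (4 * real m)"
      using m by (simp add: field_simps)
  qed
  also have "\<dots> = 1/2" using m by simp
  finally show "\<bar>\<integral>z. snd z * phi m (fst z) \<partial>M\<bar> \<le> 1/2" using E E_def by simp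
  have S1: "(\<integral>z. sfun m h (fst z) \<partial>M) = 1/2" and S2: "(\<integral>z. snd z * sfun m h (fst z) \<partial>M) = (2/3) * E"
    if h: "h \<in> {1..m} \<rightarrow>\<^sub>E {-1,1}" for h
  proof -
    have a: "(\<integral>z. sfun m h (fst z) \<partial>M) = (\<Sum>x\<in>Xset m. sfun m h x * muX m x)"
      by (rule IF(1)) (rule sfun0)
    have b: "(\<integral>z. snd z * sfun m h (fst z) \<partial>M) = (\<Sum>x\<in>Xset m. sfun m h x * b x * muX m x)"
      by (rule IF(2)) (rule sfun0)
    show "(\<integral>z. sfun m h (fst z) \<partial>M) = 1/2"
      unfolding a sum_Xset
      by (simp add: sfun_def muX_A) (simp add: muX_def field_simps)
    show "(\<integral>z. snd z * sfun m h (fst z) \<partial>M) = (2/3) * E"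
      unfolding b sum_Xset E sum_distrib_left
      by (simp add: sfun_def bpr bfun_def muX_A, intro sum.cong refl) (simp add: field_simps)
  qed
  have "MC_error M (Xset m) (Sfam m) (\<lambda>_. v) = (SUP s\<in>Sfam m. \<bar>v/2 - (2/3) * E\<bar>)"
    unfolding MC_error_def
  proof (intro SUP_cong refl)
    fix s assume "s \<in> Sfam m"
    then obtain h where s: "s = sfun m h" and h: "h \<in> {1..m} \<rightarrow>\<^sub>E {-1,1}" by (auto simp: Sfam_def)
    have im: "(\<lambda>_. v) ` Xset m = {v}" by (auto simp: Xset_def)
    have int_s: "integrable M (\<lambda>z. sfun m h (fst z))"
      by (rule integrable_const_bound[where B=1])
         (use sfun_abs[OF h] in \<open>auto intro!: meas_M[OF sM'] AE_I2 simp: NN_def\<close>)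
    have int_ys: "integrable M (\<lambda>z. snd z * sfun m h (fst z))"
    proof (rule integrable_const_bound[where B=1])
      show "AE z in M. norm (snd z * sfun m h (fst z)) \<le> 1"
        using AEb
      proof eventually_elim
        fix z :: "pt \<times> real" assume "snd z \<in> {-1..1}"
        then have "\<bar>snd z\<bar> \<le> 1" by auto
        then show "norm (snd z * sfun m h (fst z)) \<le> 1"
          using sfun_abs[OF h, of "fst z"] by (simp add: abs_mult mult_le_one)
      qed
      show "(\<lambda>z. snd z * sfun m h (fst z)) \<in> borel_measurable M"
        by (rule meas_M[OF sM']) (simp add: NN_def)
    qed
    have "(\<integral>z. (v - snd z) * indicator {v} v * s (fst z) \<partial>M)
        = (\<integral>z. v * sfun m h (fst z) - snd z * sfun m h (fst z) \<partial>M)"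
      by (simp add: s algebra_simps)
    also have "\<dots> = v * (\<integral>z. sfun m h (fst z) \<partial>M) - (\<integral>z. snd z * sfun m h (fst z) \<partial>M)"
      using int_s int_ys by simp
    also have "\<dots> = v/2 - (2/3) * E" by (simp only: S1[OF h] S2[OF h])
    finally show "(\<Sum>u\<in>(\<lambda>_. v) ` Xset m. \<bar>\<integral>z. (v - snd z) * indicator {u} v * s (fst z) \<partial>M\<bar>) = \<bar>v/2 - (2/3) * E\<bar>"
      unfolding im by simp
  qed
  also have "\<dots> = \<bar>v/2 - (2/3) * E\<bar>"
  proof -
    have "sfun m (\<lambda>_. 1) \<in> Sfam m"
      unfolding Sfam_def
      by (rule CollectI, rule exI[of _ "restrict (\<lambda>_. 1) {1..m}"]) (auto simp: sfun_def fun_eq_iff split: pt.splits)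
    then have "Sfam m \<noteq> {}" by blast
    then show ?thesis by (rule cSUP_const)
  qed
  finally show "MC_error M (Xset m) (Sfam m) (\<lambda>_. v) = \<bar>v/2 - (2/3) * (\<integral>z. snd z * phi m (fst z) \<partial>M)\<bar>"
    by (simp add: E_def)
qed




lemma numeric:
  fixes \<epsilon> \<delta> :: real and n :: nat
  assumes eps: "\<epsilon> > 0" and d0: "0 < \<delta>" and d1: "\<delta> < 1/2"
    and n: "real n \<ge> 2 / \<epsilon>^2 * log 2 (1 / \<delta>)" and n1: "n \<ge> 1"
  shows "2 * exp (-2 * (3/2 * \<epsilon> * real n)\<^sup>2 / (\<Sum>i<n. (1 - (-1::real))\<^sup>2)) \<le> \<delta>"
proof -
  have l: "ln (1/\<delta>) > 0" using d0 d1 by simp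
  have ln2: "ln (2::real) \<le> 1" using ln_le_minus_one[of 2] by simp
  have ln2p: "ln (2::real) > 0" by simp
  have "real n * \<epsilon>^2 \<ge> 2 * log 2 (1/\<delta>)" using n eps by (simp add: field_simps)
  moreover have "log 2 (1/\<delta>) = ln (1/\<delta>) / ln 2" by (simp add: log_def)
  moreover have "ln (1/\<delta>) / ln 2 \<ge> ln (1/\<delta>)"
    using l ln2 ln2p by (simp add: field_simps)
  ultimately have A: "real n * \<epsilon>^2 \<ge> 2 * ln (1/\<delta>)" by linarith
  have "-2 * (3/2 * \<epsilon> * real n)\<^sup>2 / (\<Sum>i<n. (1 - (-1::real))\<^sup>2) = -(9/8) * (real n * \<epsilon>^2)"
    using n1 by (simp add: power2_eq_square field_simps)
  also have "\<dots> \<le> - 2 * ln (1/\<delta>)" using A l by linarith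
  also have "\<dots> = ln (\<delta>^2)" using d0 by (simp add: ln_div ln_realpow)
  finally have "exp (-2 * (3/2 * \<epsilon> * real n)\<^sup>2 / (\<Sum>i<n. (1 - (-1::real))\<^sup>2)) \<le> \<delta>^2"
    using d0 by (metis exp_le_cancel_iff exp_ln zero_less_power)
  moreover have "\<delta> * (2 * \<delta>) \<le> \<delta> * 1" using d0 d1 by (intro mult_left_mono) auto
  ultimately show ?thesis by (simp add: power2_eq_square)
qed




lemma indep_coords:
  assumes P: "prob_space M" and n: "n \<ge> (1::nat)"
  shows "prob_space.indep_vars (PiM {..<n} (\<lambda>_. M)) (\<lambda>_. M) (\<lambda>k \<omega>. \<omega> k) {..<n}"
proof -
  interpret PS: prob_space "PiM {..<n} (\<lambda>_. M)" by (intro prob_space_PiM P)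
  have "distr (PiM {..<n} (\<lambda>_. M)) (PiM {..<n} (\<lambda>_. M)) (\<lambda>x. \<lambda>i\<in>{..<n}. x i) =
        distr (PiM {..<n} (\<lambda>_. M)) (PiM {..<n} (\<lambda>_. M)) (\<lambda>x. x)"
    by (rule distr_cong) (auto simp: space_PiM PiE_def extensional_restrict)
  also have "\<dots> = PiM {..<n} (\<lambda>_. M)" by simp
  also have "\<dots> = PiM {..<n} (\<lambda>i. distr (PiM {..<n} (\<lambda>_. M)) M (\<lambda>\<omega>. \<omega> i))"
    by (rule PiM_cong) (auto intro!: distr_PiM_component[symmetric] P)
  moreover have ne: "{..<n} \<noteq> {}" using n by (auto simp: lessThan_empty_iff)
  ultimately show ?thesis
    by (subst PS.indep_vars_iff_distr_eq_PiM'[OF ne]) auto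
qed




definition clip1 :: "real \<Rightarrow> real" where "clip1 y = max (-1) (min 1 y)"

definition estv :: "nat \<Rightarrow> nat \<Rightarrow> (pt \<times> real) list \<Rightarrow> real" where
  "estv m n D = (4/3) * max (-1/2) (min (1/2) (sum_list (map (\<lambda>(x,y). phi m x * clip1 y) D) / real n))"

definition Lrn :: "nat \<Rightarrow> nat \<Rightarrow> (pt \<times> real) list \<Rightarrow> model measure" where
  "Lrn m n D = return (count_space {\<lambda>_. estv m n D}) (\<lambda>_. estv m n D)"

lemma estv_bound: "estv m n D \<in> {-1..1}"
  by (auto simp: estv_def)

lemma clipH_lip:
  fixes s E :: real
  assumes "\<bar>E\<bar> \<le> 1/2"
  shows "\<bar>max (-1/2) (min (1/2) s) - E\<bar> \<le> \<bar>s - E\<bar>"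
  using assms by (auto simp: abs_le_iff max_def min_def)

lemma fin_arith:
  fixes c E \<epsilon> :: real
  assumes "\<bar>c - E\<bar> < 3/2 * \<epsilon>"
  shows "\<bar>(4/3 * c)/2 - (2/3) * E\<bar> \<le> \<epsilon>"
  using assms by (auto simp: abs_if split: if_splits)

lemma learner_ok:
  assumes m: "m > 0" and eps: "\<epsilon> > 0" and d0: "0 < \<delta>" and d1: "\<delta> < 1/2"
    and n: "real n \<ge> 2 / \<epsilon>^2 * log 2 (1 / \<delta>)" and n1: "n \<ge> 1"
  shows "MC_learner (Xset m) (muX m) (Bfam m) (Sfam m) \<epsilon> \<delta> n (Lrn m n)"
proof -
  have part1: "prob_space (Lrn m n D) \<and>
          (\<forall>f\<in>space (Lrn m n D). (\<forall>x\<in>Xset m. f x \<in> {-1..1}) \<and> countable (f ` Xset m))" for D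
  proof -
    have "prob_space (Lrn m n D)" unfolding Lrn_def by (rule prob_space_return) simp
    moreover have "\<forall>f\<in>space (Lrn m n D). (\<forall>x\<in>Xset m. f x \<in> {-1..1}) \<and> countable (f ` Xset m)"
    proof
      fix f assume "f \<in> space (Lrn m n D)"
      then have f: "f = (\<lambda>_. estv m n D)" by (simp add: Lrn_def)
      have "f ` Xset m \<subseteq> {estv m n D}" using f by auto
      then have "countable (f ` Xset m)" by (rule countable_subset) simp
      then show "(\<forall>x\<in>Xset m. f x \<in> {-1..1}) \<and> countable (f ` Xset m)"
        using estv_bound f by simp
    qed
    ultimately show ?thesis by blast
  qed
  have part2: "(\<integral>\<^sup>+ smp. inner_prob (Lrn m n (map smp [0..<n])) {f. MC_error M (Xset m) (Sfam m) f \<le> \<epsilon>}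
              \<partial>(PiM {..<n} (\<lambda>_. M))) \<ge> ennreal (1 - \<delta>)"
    if R: "realizable_dist (Xset m) (muX m) (Bfam m) M" for M
  proof -
    have P: "prob_space M" and sM: "sets M = sets (count_space UNIV \<Otimes>\<^sub>M borel)"
      and AE: "AE z in M. fst z \<in> Xset m \<and> snd z \<in> {-1..1}"
      using R unfolding realizable_dist_def by blast+
    have sM': "sets M = sets NN" using sM by (simp add: NN_def)
    define E where "E = (\<integral>z. snd z * phi m (fst z) \<partial>M)"
    have Eb: "\<bar>E\<bar> \<le> 1/2" unfolding E_def by (rule err_const(1)[OF m R])
    have errv: "MC_error M (Xset m) (Sfam m) (\<lambda>_. v) = \<bar>v/2 - (2/3) * E\<bar>" for v
      unfolding E_def by (rule err_const(2)[OF m R])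
    define \<Omega> where "\<Omega> = PiM {..<n} (\<lambda>_. M)"
    interpret PS: prob_space \<Omega> unfolding \<Omega>_def by (intro prob_space_PiM P)
    define Y where "Y z = phi m (fst z) * clip1 (snd z)" for z :: "pt \<times> real"
    define X where "X k \<omega> = Y (\<omega> k)" for k :: nat and \<omega> :: "nat \<Rightarrow> pt \<times> real"
    have Ymeas: "Y \<in> borel_measurable M"
      by (rule meas_M[OF sM']) (unfold NN_def Y_def clip1_def, measurable)
    have Ybd: "Y z \<in> {-1..1}" for z
    proof -
      have "\<bar>phi m (fst z)\<bar> \<le> 1" by (rule phi_bound)
      moreover have "\<bar>clip1 (snd z)\<bar> \<le> 1" by (auto simp: clip1_def)
      ultimately have "\<bar>Y z\<bar> \<le> 1" unfolding Y_def by (simp add: abs_mult mult_le_one)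
      then show ?thesis by (simp add: abs_le_iff)
    qed
    have indepX: "PS.indep_vars (\<lambda>_. borel) X {..<n}"
    proof -
      have "X = (\<lambda>i x. Y (x i))" by (simp add: X_def fun_eq_iff)
      then show ?thesis
        using PS.indep_vars_compose2[OF indep_coords[OF P n1, folded \<Omega>_def], of "\<lambda>_. Y" "\<lambda>_. borel"] Ymeas
        by simp
    qed
    have EX: "PS.expectation (X k) = E" if k: "k < n" for k
    proof -
      have "PS.expectation (X k) = (\<integral>\<omega>. Y (\<omega> k) \<partial>\<Omega>)"
        by (rule arg_cong[where f=PS.expectation]) (simp add: fun_eq_iff X_def)
      also have "\<dots> = (\<integral>z. Y z \<partial>distr \<Omega> M (\<lambda>\<omega>. \<omega> k))"
        by (rule integral_distr[symmetric]) (use k Ymeas in \<open>auto simp: \<Omega>_def\<close>)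
      also have "distr \<Omega> M (\<lambda>\<omega>. \<omega> k) = M"
        unfolding \<Omega>_def by (rule distr_PiM_component) (use P k in auto)
      also have "(\<integral>z. Y z \<partial>M) = E"
        unfolding E_def
      proof (rule integral_cong_AE)
        show "Y \<in> borel_measurable M" by (rule Ymeas)
        show "(\<lambda>z. snd z * phi m (fst z)) \<in> borel_measurable M"
          by (rule meas_M[OF sM']) (simp add: NN_def)
        show "AE z in M. Y z = snd z * phi m (fst z)"
          using AE by eventually_elim (auto simp: Y_def clip1_def)
      qed
      finally show ?thesis .
    qed
    interpret H: Hoeffding_ineq \<Omega> "{..<n}" X "\<lambda>_. -1" "\<lambda>_. 1" "real n * E"
    proof unfold_locales
      show "finite {..<n}" by simp
      show "PS.indep_vars (\<lambda>_. borel) X {..<n}" by (rule indepX)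
      show "AE x in \<Omega>. X i x \<in> {-1..1}" for i using Ybd by (simp add: X_def)
      show "real n * E \<equiv> \<Sum>i<n. PS.expectation (X i)" using EX by simp
    qed
    define t where "t = 3/2 * \<epsilon> * real n"
    define Bad where "Bad = {x \<in> space \<Omega>. \<bar>(\<Sum>i<n. X i x) - real n * E\<bar> \<ge> t}"
    have "PS.prob Bad \<le> 2 * exp (-2 * t\<^sup>2 / (\<Sum>i<n. (1 - (-1::real))\<^sup>2))"
      unfolding Bad_def
      by (rule H.Hoeffding_ineq_abs_ge) (use eps n1 in \<open>auto simp: t_def intro!: sum_pos\<close>)
    also have "\<dots> \<le> \<delta>" unfolding t_def by (rule numeric[OF eps d0 d1 n n1])
    finally have pB: "PS.prob Bad \<le> \<delta>" .
    have Smeas: "(\<lambda>x. \<Sum>i<n. X i x) \<in> borel_measurable \<Omega>"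
      using indepX by (intro borel_measurable_sum) (auto simp: PS.indep_vars_def)
    have Bad_ev: "Bad \<in> PS.events"
      unfolding Bad_def
      by (rule borel_measurable_le) (use Smeas in auto)
    define G where "G = space \<Omega> - Bad"
    have G_ev: "G \<in> PS.events" unfolding G_def using Bad_ev by auto
    have "ennreal (1 - \<delta>) \<le> ennreal (PS.prob G)"
      using PS.prob_compl[OF Bad_ev] pB by (simp add: G_def)
    also have "\<dots> = emeasure \<Omega> G" by (simp add: PS.emeasure_eq_measure)
    also have "\<dots> = (\<integral>\<^sup>+\<omega>. indicator G \<omega> \<partial>\<Omega>)" using G_ev by simp
    also have "\<dots> \<le> (\<integral>\<^sup>+ smp. inner_prob (Lrn m n (map smp [0..<n])) {f. MC_error M (Xset m) (Sfam m) f \<le> \<epsilon>} \<partial>\<Omega>)"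
    proof (rule nn_integral_mono)
      fix \<omega> assume "\<omega> \<in> space \<Omega>"
      show "indicator G \<omega> \<le> inner_prob (Lrn m n (map \<omega> [0..<n])) {f. MC_error M (Xset m) (Sfam m) f \<le> \<epsilon>}"
      proof (cases "\<omega> \<in> G")
        case False then show ?thesis by simp
      next
        case True
        let ?D = "map \<omega> [0..<n]"
        let ?f = "\<lambda>_::pt. estv m n ?D"
        define S where "S = (\<Sum>i<n. X i \<omega>)"
        have Sl: "sum_list (map (\<lambda>(x,y). phi m x * clip1 y) ?D) = S"
          unfolding S_def X_def Y_def
          by (simp add: interv_sum_list_conv_sum_set_nat atLeast0LessThan case_prod_beta')
        have "\<bar>S - real n * E\<bar> < t" using True by (auto simp: G_def Bad_def S_def)
        then have "\<bar>S / real n - E\<bar> < 3/2 * \<epsilon>"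
          using n1 by (simp add: t_def field_simps abs_less_iff)
        then have "\<bar>max (-1/2) (min (1/2) (S / real n)) - E\<bar> < 3/2 * \<epsilon>"
          using clipH_lip[OF Eb, of "S / real n"] by linarith
        then have "MC_error M (Xset m) (Sfam m) ?f \<le> \<epsilon>"
          unfolding errv estv_def Sl by (rule fin_arith)
        then have mem: "{?f} \<in> {C \<in> sets (Lrn m n ?D). C \<subseteq> {f. MC_error M (Xset m) (Sfam m) f \<le> \<epsilon>}}"
          by (simp add: Lrn_def)
        have "emeasure (Lrn m n ?D) {?f} = indicator {?f} ?f"
          unfolding Lrn_def by (rule emeasure_return) simp
        then have e1: "emeasure (Lrn m n ?D) {?f} = 1" by simp
        have "emeasure (Lrn m n ?D) {?f} \<le> inner_prob (Lrn m n ?D) {f. MC_error M (Xset m) (Sfam m) f \<le> \<epsilon>}"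
          unfolding inner_prob_def by (rule SUP_upper[OF mem])
        then have "1 \<le> inner_prob (Lrn m n ?D) {f. MC_error M (Xset m) (Sfam m) f \<le> \<epsilon>}"
          by (simp only: e1)
        then show ?thesis using True by simp
      qed
    qed
    finally show ?thesis by (simp add: \<Omega>_def)
  qed
  show ?thesis unfolding MC_learner_def using part1 part2 by blast
qed





theorem lemmaC4:
  shows "(\<exists>C>0. \<forall>m::nat. \<forall>\<epsilon> \<delta>::real. m > 0 \<and> 0 < \<epsilon> \<and> \<epsilon> < 1/2 \<and> 0 < \<delta> \<and> \<delta> < 1/2 \<longrightarrow>
            numMC (Xset m) (muX m) (Bfam m) (Sfam m) \<epsilon> \<delta>
              \<le> enat (nat \<lceil>C / \<epsilon>^2 * log 2 (1 / \<delta>)\<rceil>))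
       \<and> (\<forall>m::nat. \<forall>\<epsilon> \<delta>::real. m > 0 \<and> 0 < \<epsilon> \<and> \<epsilon> < 1/28 \<and> 0 < \<delta> \<and> \<delta> < 1/2 \<longrightarrow>
            enat (nat \<lceil>(1 - 28 * \<epsilon>) * real m\<rceil>) \<le> numMC (Xset m) (muX m) (Sfam m) (Bfam m) \<epsilon> \<delta>)"
proof (intro conjI)
  show "\<exists>C>0. \<forall>m::nat. \<forall>\<epsilon> \<delta>::real. m > 0 \<and> 0 < \<epsilon> \<and> \<epsilon> < 1/2 \<and> 0 < \<delta> \<and> \<delta> < 1/2 \<longrightarrow>
            numMC (Xset m) (muX m) (Bfam m) (Sfam m) \<epsilon> \<delta>
              \<le> enat (nat \<lceil>C / \<epsilon>^2 * log 2 (1 / \<delta>)\<rceil>)"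
  proof (intro exI[of _ "2::real"] conjI allI impI)
    fix m :: nat and \<epsilon> \<delta> :: real
    assume a: "m > 0 \<and> 0 < \<epsilon> \<and> \<epsilon> < 1/2 \<and> 0 < \<delta> \<and> \<delta> < 1/2"
    define n where "n = nat \<lceil>2 / \<epsilon>^2 * log 2 (1 / \<delta>)\<rceil>"
    have lg: "log 2 (1 / \<delta>) > 0" using a by simp
    have pos: "2 / \<epsilon>^2 * log 2 (1 / \<delta>) > 0" using a lg by simp
    have nge: "real n \<ge> 2 / \<epsilon>^2 * log 2 (1 / \<delta>)" unfolding n_def by linarith
    have n1: "n \<ge> 1" using nge pos by simp
    have "MC_learnable (Xset m) (muX m) (Bfam m) (Sfam m) \<epsilon> \<delta> n"
      unfolding MC_learnable_def using learner_ok[of m \<epsilon> \<delta> n] a nge n1 by blast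
    then show "numMC (Xset m) (muX m) (Bfam m) (Sfam m) \<epsilon> \<delta> \<le> enat n"
      unfolding numMC_def by (intro INF_lower) simp
  qed simp
  show "\<forall>m::nat. \<forall>\<epsilon> \<delta>::real. m > 0 \<and> 0 < \<epsilon> \<and> \<epsilon> < 1/28 \<and> 0 < \<delta> \<and> \<delta> < 1/2 \<longrightarrow>
            enat (nat \<lceil>(1 - 28 * \<epsilon>) * real m\<rceil>) \<le> numMC (Xset m) (muX m) (Sfam m) (Bfam m) \<epsilon> \<delta>"
  proof (intro allI impI)
    fix m :: nat and \<epsilon> \<delta> :: real
    assume a: "m > 0 \<and> 0 < \<epsilon> \<and> \<epsilon> < 1/28 \<and> 0 < \<delta> \<and> \<delta> < 1/2"
    show "enat (nat \<lceil>(1 - 28 * \<epsilon>) * real m\<rceil>) \<le> numMC (Xset m) (muX m) (Sfam m) (Bfam m) \<epsilon> \<delta>"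
      unfolding numMC_def
    proof (rule INF_greatest)
      fix n assume "n \<in> {n. MC_learnable (Xset m) (muX m) (Sfam m) (Bfam m) \<epsilon> \<delta> n}"
      then obtain L where L: "MC_learner (Xset m) (muX m) (Sfam m) (Bfam m) \<epsilon> \<delta> n L"
        by (auto simp: MC_learnable_def)
      show "enat (nat \<lceil>(1 - 28 * \<epsilon>) * real m\<rceil>) \<le> enat n"
      proof (rule ccontr)
        assume "\<not> enat (nat \<lceil>(1 - 28 * \<epsilon>) * real m\<rceil>) \<le> enat n"
        then have "real n < (1 - 28 * \<epsilon>) * real m" by simp
        then show False using not_learner[of m \<epsilon> \<delta> n L] a L by blast
      qed
    qed
  qed
qed


end
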